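(* Let $(\Omega(\mathcal{A}),d)$ be a differential calculus on a complex algebra $\mathcal{A}$ with $\mathcal{E}=\Omega^1(\mathcal{A})$ a finitely generated projective right $\mathcal{A}$-module satisfying: (1) $\mathcal{E}=\mathcal{Z}(\mathcal{E})\otimes_{\mathcal{Z}(\mathcal{A})}\mathcal{A}$; (2) $\mathcal{E}\otimes_{\mathcal{A}}\mathcal{E}=\ker(\wedge)\oplus\mathcal{F}$ with $Q=\wedge|_{\mathcal{F}}:\mathcal{F}\to\Omega^2(\mathcal{A})$ a right $\mathcal{A}$-linear isomorphism; (3) $\sigma(\omega\otimes_{\mathcal{A}}\eta)=\eta\otimes_{\mathcal{A}}\omega$ for all $\omega,\eta\in\mathcal{Z}(\mathcal{E})$. Let $\nabla_1$ be a connection on $\mathcal{E}$. Then $\nabla_1$ is a bimodule connection for the pair $(\mathcal{E},\sigma)$ if and only if $\nabla_1(\mathcal{Z}(\mathcal{E}))\subseteq\mathcal{Z}(\mathcal{E}\otimes_{\mathcal{A}}\mathcal{E})$.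
   Context: A differential calculus: $\Omega(\mathcal{A})=\oplus_{j\ge0}\Omega^j(\mathcal{A})$, $\Omega^0=\mathcal{A}$, bimodules $\Omega^j$, an $\mathcal{A}$-bimodule product $\wedge$ adding degrees, $d$ of degree one with $d^2=0$ and the graded Leibniz rule, $\Omega^j$ right-spanned by $da_0\wedge\cdots\wedge da_{j-1}$. $\wedge:\mathcal{E}\otimes_{\mathcal{A}}\mathcal{E}\to\Omega^2(\mathcal{A})$ is the induced product; $\mathcal{F}$ is a right submodule; $P_{\rm sym}$ is the idempotent with image $\ker\wedge$ and kernel $\mathcal{F}$; $\sigma=2P_{\rm sym}-1$. $\mathcal{Z}(\mathcal{M})=\{m:am=ma\ \forall a\in\mathcal{A}\}$. Condition (1) means the multiplication map $\mathcal{Z}(\mathcal{E})\otimes_{\mathcal{Z}(\mathcal{A})}\mathcal{A}\to\mathcal{E}$ is an isomorphism. A connection is a $\mathbb{C}$-linear $\nabla:\mathcal{E}\to\mathcal{E}\otimes_{\mathcal{A}}\mathcal{E}$ with $\nabla(\omega a)=\nabla(\omega)a+\omega\otimes_{\mathcal{A}}da$. It is a bimodule connection for $(\mathcal{E},\sigma)$ if moreover $\nabla(ae)=a\nabla(e)+\sigma(da\otimes_{\mathcal{A}}e)$ for all $a\in\mathcal{A}$, $e\in\mathcal{E}$. *)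

theory Defs
  imports Complex_Main "HOL-Library.Poly_Mapping"
begin

definition zsm :: "int \<Rightarrow> 'g::ab_group_add \<Rightarrow> 'g" where
  "zsm n x = (if 0 \<le> n then (\<Sum>_<nat n. x) else - (\<Sum>_<nat (- n). x))"

definition fsum_eval :: "('m \<Rightarrow> 'n \<Rightarrow> 'g::ab_group_add) \<Rightarrow> ('m \<times> 'n \<Rightarrow>\<^sub>0 int) \<Rightarrow> 'g" where
  "fsum_eval phi x = (\<Sum>k\<in>Poly_Mapping.keys x. zsm (Poly_Mapping.lookup x k) (phi (fst k) (snd k)))"

text \<open>The subgroup of the free abelian group on M x N generated by the
  defining relations of the balanced tensor product of a right R-module M
  (right action rm) with a left R-module N (left action lm).\<close>

inductive_set balrel ::
  "'m::ab_group_add set \<Rightarrow> 'n::ab_group_add set \<Rightarrow> 'r set \<Rightarrow> ('m \<Rightarrow> 'r \<Rightarrow> 'm) \<Rightarrow> ('r \<Rightarrow> 'n \<Rightarrow> 'n)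
   \<Rightarrow> ('m \<times> 'n \<Rightarrow>\<^sub>0 int) set"
  for M N R rm lm where
  zero: "0 \<in> balrel M N R rm lm"
| addL: "m1 \<in> M \<Longrightarrow> m2 \<in> M \<Longrightarrow> n \<in> N \<Longrightarrow>
     Poly_Mapping.single (m1 + m2, n) 1 - Poly_Mapping.single (m1, n) 1 - Poly_Mapping.single (m2, n) 1
       \<in> balrel M N R rm lm"
| addR: "m \<in> M \<Longrightarrow> n1 \<in> N \<Longrightarrow> n2 \<in> N \<Longrightarrow>
     Poly_Mapping.single (m, n1 + n2) 1 - Poly_Mapping.single (m, n1) 1 - Poly_Mapping.single (m, n2) 1
       \<in> balrel M N R rm lm"
| bal: "m \<in> M \<Longrightarrow> n \<in> N \<Longrightarrow> r \<in> R \<Longrightarrow>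
     Poly_Mapping.single (rm m r, n) 1 - Poly_Mapping.single (m, lm r n) 1 \<in> balrel M N R rm lm"
| add: "x \<in> balrel M N R rm lm \<Longrightarrow> y \<in> balrel M N R rm lm \<Longrightarrow> x + y \<in> balrel M N R rm lm"
| neg: "x \<in> balrel M N R rm lm \<Longrightarrow> - x \<in> balrel M N R rm lm"

definition balanced_map ::
  "'m::ab_group_add set \<Rightarrow> 'n::ab_group_add set \<Rightarrow> 'r set \<Rightarrow> ('m \<Rightarrow> 'r \<Rightarrow> 'm) \<Rightarrow> ('r \<Rightarrow> 'n \<Rightarrow> 'n)
   \<Rightarrow> ('m \<Rightarrow> 'n \<Rightarrow> 'g::ab_group_add) \<Rightarrow> bool" where
  "balanced_map M N R rm lm phi \<longleftrightarrow>
     (\<forall>m1\<in>M. \<forall>m2\<in>M. \<forall>n\<in>N. phi (m1 + m2) n = phi m1 n + phi m2 n) \<and>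
     (\<forall>m\<in>M. \<forall>n1\<in>N. \<forall>n2\<in>N. phi m (n1 + n2) = phi m n1 + phi m n2) \<and>
     (\<forall>m\<in>M. \<forall>n\<in>N. \<forall>r\<in>R. phi (rm m r) n = phi m (lm r n))"

text \<open>The additive map M (x)_R N -> G induced by a balanced map phi is a
  bijection: surjective, and its kernel is exactly the relation subgroup
  (i.e. it is injective on the quotient of the free abelian group).\<close>

definition induced_map_bij ::
  "'m::ab_group_add set \<Rightarrow> 'n::ab_group_add set \<Rightarrow> 'r set \<Rightarrow> ('m \<Rightarrow> 'r \<Rightarrow> 'm) \<Rightarrow> ('r \<Rightarrow> 'n \<Rightarrow> 'n)
   \<Rightarrow> ('m \<Rightarrow> 'n \<Rightarrow> 'g::ab_group_add) \<Rightarrow> bool" where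
  "induced_map_bij M N R rm lm phi \<longleftrightarrow>
     balanced_map M N R rm lm phi \<and>
     (\<forall>g. \<exists>x. Poly_Mapping.keys x \<subseteq> M \<times> N \<and> fsum_eval phi x = g) \<and>
     (\<forall>x. Poly_Mapping.keys x \<subseteq> M \<times> N \<and> fsum_eval phi x = 0 \<longrightarrow> x \<in> balrel M N R rm lm)"

abbreviation is_tensor_product where
  "is_tensor_product M N R rm lm tens \<equiv> induced_map_bij M N R rm lm tens"

definition centre_alg :: "'a::ring_1 set" where
  "centre_alg = {r. \<forall>a. r * a = a * r}"

definition centre_bimod :: "('a \<Rightarrow> 'm \<Rightarrow> 'm) \<Rightarrow> ('m \<Rightarrow> 'a \<Rightarrow> 'm) \<Rightarrow> 'm set" where
  "centre_bimod l r = {m. \<forall>a. l a m = r m a}"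

definition additive :: "('g::ab_group_add \<Rightarrow> 'h::ab_group_add) \<Rightarrow> bool" where
  "additive f \<longleftrightarrow> (\<forall>x y. f (x + y) = f x + f y)"

definition complex_alg :: "(complex \<Rightarrow> 'a::ring_1) \<Rightarrow> bool" where
  "complex_alg c \<longleftrightarrow> c 1 = 1 \<and> (\<forall>z w. c (z + w) = c z + c w) \<and> (\<forall>z w. c (z * w) = c z * c w)
     \<and> (\<forall>z a. c z * a = a * c z)"

definition bimodule :: "(complex \<Rightarrow> 'a::ring_1) \<Rightarrow> ('a \<Rightarrow> 'm::ab_group_add \<Rightarrow> 'm) \<Rightarrow> ('m \<Rightarrow> 'a \<Rightarrow> 'm) \<Rightarrow> bool" where
  "bimodule c l r \<longleftrightarrow>
     (\<forall>a m n. l a (m + n) = l a m + l a n) \<and> (\<forall>a b m. l (a + b) m = l a m + l b m) \<and>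
     (\<forall>a b m. l (a * b) m = l a (l b m)) \<and> (\<forall>m. l 1 m = m) \<and>
     (\<forall>a m n. r (m + n) a = r m a + r n a) \<and> (\<forall>a b m. r m (a + b) = r m a + r m b) \<and>
     (\<forall>a b m. r m (a * b) = r (r m a) b) \<and> (\<forall>m. r m 1 = m) \<and>
     (\<forall>a b m. l a (r m b) = r (l a m) b) \<and>
     (\<forall>z m. l (c z) m = r m (c z))"

text \<open>Finitely generated projective right module: a direct summand (retract,
  by right-linear maps) of a free right module A^n.\<close>

definition fgp_right :: "('m::ab_group_add \<Rightarrow> 'a::ring_1 \<Rightarrow> 'm) \<Rightarrow> bool" where
  "fgp_right r \<longleftrightarrow> (\<exists>(n::nat) (i :: 'm \<Rightarrow> nat \<Rightarrow> 'a) (p :: (nat \<Rightarrow> 'a) \<Rightarrow> 'm).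
     (\<forall>m k. n \<le> k \<longrightarrow> i m k = 0) \<and>
     (\<forall>m m' k. i (m + m') k = i m k + i m' k) \<and> (\<forall>m a. i (r m a) = (\<lambda>k. i m k * a)) \<and>
     (\<forall>v w. p (\<lambda>k. v k + w k) = p v + p w) \<and> (\<forall>v a. p (\<lambda>k. v k * a) = r (p v) a) \<and>
     (\<forall>m. p (i m) = m))"

text \<open>A differential calculus, truncated at degree 2 (all data involved in
  the statement): Omega^0 = A, Omega^1 = E, Omega^2 = W, differentials
  d0 : A -> E, d1 : E -> W, and the product wedge : E x E -> W.\<close>

definition diff_calc ::
  "(complex \<Rightarrow> 'a::ring_1) \<Rightarrow> ('a \<Rightarrow> 'e::ab_group_add \<Rightarrow> 'e) \<Rightarrow> ('e \<Rightarrow> 'a \<Rightarrow> 'e)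
   \<Rightarrow> ('a \<Rightarrow> 'w::ab_group_add \<Rightarrow> 'w) \<Rightarrow> ('w \<Rightarrow> 'a \<Rightarrow> 'w)
   \<Rightarrow> ('a \<Rightarrow> 'e) \<Rightarrow> ('e \<Rightarrow> 'w) \<Rightarrow> ('e \<Rightarrow> 'e \<Rightarrow> 'w) \<Rightarrow> bool" where
  "diff_calc c lE rE lW rW d0 d1 wedge \<longleftrightarrow>
     complex_alg c \<and> bimodule c lE rE \<and> bimodule c lW rW \<and>
     \<comment> \<open>d0: C-linear, Leibniz rule\<close>
     additive d0 \<and> (\<forall>z a. d0 (c z * a) = lE (c z) (d0 a)) \<and>
     (\<forall>a b. d0 (a * b) = rE (d0 a) b + lE a (d0 b)) \<and>
     \<comment> \<open>wedge: bimodule product E x E -> W\<close>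
     (\<forall>e f g. wedge (e + f) g = wedge e g + wedge f g) \<and>
     (\<forall>e f g. wedge e (f + g) = wedge e f + wedge e g) \<and>
     (\<forall>a e f. wedge (lE a e) f = lW a (wedge e f)) \<and>
     (\<forall>a e f. wedge (rE e a) f = wedge e (lE a f)) \<and>
     (\<forall>a e f. wedge e (rE f a) = rW (wedge e f) a) \<and>
     \<comment> \<open>d1: C-linear, d1 o d0 = 0, graded Leibniz rule\<close>
     additive d1 \<and> (\<forall>z e. d1 (lE (c z) e) = lW (c z) (d1 e)) \<and>
     (\<forall>a. d1 (d0 a) = 0) \<and>
     (\<forall>a e. d1 (lE a e) = wedge (d0 a) e + lW a (d1 e)) \<and>
     (\<forall>a e. d1 (rE e a) = rW (d1 e) a - wedge e (d0 a)) \<and>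
     \<comment> \<open>spanning conditions\<close>
     (\<forall>e. \<exists>xs. e = (\<Sum>(a, b)\<leftarrow>xs. rE (d0 a) b)) \<and>
     (\<forall>w. \<exists>xs. w = (\<Sum>(a, b, b')\<leftarrow>xs. rW (wedge (d0 a) (d0 b)) b'))"

text \<open>P_sym: the idempotent with image ker(wedge) and kernel F.\<close>

definition Psym :: "('t::ab_group_add \<Rightarrow> 'w::ab_group_add) \<Rightarrow> 't set \<Rightarrow> 't \<Rightarrow> 't" where
  "Psym wT F t = (THE k. wT k = 0 \<and> t - k \<in> F)"

definition sigma :: "('t::ab_group_add \<Rightarrow> 'w::ab_group_add) \<Rightarrow> 't set \<Rightarrow> 't \<Rightarrow> 't" where
  "sigma wT F t = Psym wT F t + Psym wT F t - t"

definition tensor_square ::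
  "('a::ring_1 \<Rightarrow> 'e::ab_group_add \<Rightarrow> 'e) \<Rightarrow> ('e \<Rightarrow> 'a \<Rightarrow> 'e) \<Rightarrow> ('e \<Rightarrow> 'e \<Rightarrow> 't::ab_group_add)
   \<Rightarrow> ('a \<Rightarrow> 't \<Rightarrow> 't) \<Rightarrow> ('t \<Rightarrow> 'a \<Rightarrow> 't) \<Rightarrow> bool" where
  "tensor_square lE rE tens lT rT \<longleftrightarrow>
     is_tensor_product UNIV UNIV UNIV rE lE tens \<and>
     (\<forall>a. additive (lT a)) \<and> (\<forall>a. additive (\<lambda>t. rT t a)) \<and>
     (\<forall>a e f. lT a (tens e f) = tens (lE a e) f) \<and>
     (\<forall>a e f. rT (tens e f) a = tens e (rE f a))"

definition right_submodule :: "('t::ab_group_add \<Rightarrow> 'a \<Rightarrow> 't) \<Rightarrow> 't set \<Rightarrow> bool" where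
  "right_submodule rT F \<longleftrightarrow> 0 \<in> F \<and> (\<forall>x\<in>F. \<forall>y\<in>F. x + y \<in> F) \<and> (\<forall>x\<in>F. - x \<in> F) \<and>
     (\<forall>x\<in>F. \<forall>a. rT x a \<in> F)"

definition connection ::
  "(complex \<Rightarrow> 'a::ring_1) \<Rightarrow> ('e::ab_group_add \<Rightarrow> 'a \<Rightarrow> 'e) \<Rightarrow> ('t::ab_group_add \<Rightarrow> 'a \<Rightarrow> 't)
   \<Rightarrow> ('e \<Rightarrow> 'e \<Rightarrow> 't) \<Rightarrow> ('a \<Rightarrow> 'e) \<Rightarrow> ('e \<Rightarrow> 't) \<Rightarrow> bool" where
  "connection c rE rT tens d0 nabla \<longleftrightarrow>
     additive nabla \<and> (\<forall>z e. nabla (rE e (c z)) = rT (nabla e) (c z)) \<and>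
     (\<forall>w a. nabla (rE w a) = rT (nabla w) a + tens w (d0 a))"

definition bimodule_connection ::
  "(complex \<Rightarrow> 'a::ring_1) \<Rightarrow> ('a \<Rightarrow> 'e::ab_group_add \<Rightarrow> 'e) \<Rightarrow> ('e \<Rightarrow> 'a \<Rightarrow> 'e)
   \<Rightarrow> ('a \<Rightarrow> 't::ab_group_add \<Rightarrow> 't) \<Rightarrow> ('t \<Rightarrow> 'a \<Rightarrow> 't)
   \<Rightarrow> ('e \<Rightarrow> 'e \<Rightarrow> 't) \<Rightarrow> ('a \<Rightarrow> 'e) \<Rightarrow> ('t \<Rightarrow> 't) \<Rightarrow> ('e \<Rightarrow> 't) \<Rightarrow> bool" where
  "bimodule_connection c lE rE lT rT tens d0 \<sigma> nabla \<longleftrightarrow>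
     connection c rE rT tens d0 nabla \<and>
     (\<forall>a e. nabla (lE a e) = lT a (nabla e) + \<sigma> (tens (d0 a) e))"

end

theory Submission
  imports Defs
begin



lemma additive_0: "additive f \<Longrightarrow> f 0 = 0"
  unfolding additive_def by (metis add_cancel_left_left add_0)

lemma additive_neg: "additive f \<Longrightarrow> f (- x) = - f x"
  using additive_0[of f] unfolding additive_def
  by (metis add.right_inverse neg_eq_iff_add_eq_0)

lemma additive_diff: "additive f \<Longrightarrow> f (x - y) = f x - f y"
  using additive_neg[of f] unfolding additive_def
  by (metis diff_conv_add_uminus)

lemma additive_sum: "additive f \<Longrightarrow> f (sum g A) = (\<Sum>a\<in>A. f (g a))"
proof (cases "finite A")
  case True
  assume a: "additive f"
  show ?thesis using True
    by (induction A rule: finite_induct) (auto simp: additive_0[OF a] a[unfolded additive_def])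
next
  case False
  assume a: "additive f"
  then show ?thesis using False by (simp add: additive_0)
qed

lemma additive_zsm: "additive f \<Longrightarrow> f (zsm n y) = zsm n (f y)"
  unfolding zsm_def by (simp add: additive_sum additive_neg)

lemma additive_fsum: "additive f \<Longrightarrow> f (fsum_eval phi x) = fsum_eval (\<lambda>m n. f (phi m n)) x"
  unfolding fsum_eval_def by (simp add: additive_sum additive_zsm)

lemma additive_eq_span:
  assumes "additive f" "additive g"
    and "\<And>k. k \<in> Poly_Mapping.keys x \<Longrightarrow> f (phi (fst k) (snd k)) = g (phi (fst k) (snd k))"
  shows "f (fsum_eval phi x) = g (fsum_eval phi x)"
proof -
  have "f (fsum_eval phi x) = fsum_eval (\<lambda>m n. f (phi m n)) x" by (rule additive_fsum[OF assms(1)])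
  also have "\<dots> = fsum_eval (\<lambda>m n. g (phi m n)) x"
    unfolding fsum_eval_def using assms(3) by (intro sum.cong) auto
  also have "\<dots> = g (fsum_eval phi x)" by (rule additive_fsum[OF assms(2), symmetric])
  finally show ?thesis .
qed


theorem proposition7p2:
  fixes c :: "complex \<Rightarrow> 'a::ring_1"
    and lE :: "'a \<Rightarrow> 'e::ab_group_add \<Rightarrow> 'e" and rE :: "'e \<Rightarrow> 'a \<Rightarrow> 'e"
    and lW :: "'a \<Rightarrow> 'w::ab_group_add \<Rightarrow> 'w" and rW :: "'w \<Rightarrow> 'a \<Rightarrow> 'w"
    and d0 :: "'a \<Rightarrow> 'e" and d1 :: "'e \<Rightarrow> 'w" and wedge :: "'e \<Rightarrow> 'e \<Rightarrow> 'w"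
    and tens :: "'e \<Rightarrow> 'e \<Rightarrow> 't::ab_group_add"
    and lT :: "'a \<Rightarrow> 't \<Rightarrow> 't" and rT :: "'t \<Rightarrow> 'a \<Rightarrow> 't"
    and wT :: "'t \<Rightarrow> 'w" and F :: "'t set" and nabla :: "'e \<Rightarrow> 't"
  assumes calc: "diff_calc c lE rE lW rW d0 d1 wedge"
    and fgp: "fgp_right rE"
    and tensor: "tensor_square lE rE tens lT rT"
    and wT_add: "additive wT"
    and wT_tens: "\<And>e f. wT (tens e f) = wedge e f"
    and cond1: "induced_map_bij (centre_bimod lE rE) UNIV centre_alg rE (*) rE"
    and F_sub: "right_submodule rT F"
    and cond2_sum: "\<And>t. \<exists>k f. wT k = 0 \<and> f \<in> F \<and> t = k + f"
    and cond2_int: "{k. wT k = 0} \<inter> F = {0}"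
    and cond2_Q: "bij_betw wT F UNIV"
    and cond3: "\<And>w v. w \<in> centre_bimod lE rE \<Longrightarrow> v \<in> centre_bimod lE rE \<Longrightarrow>
                  sigma wT F (tens w v) = tens v w"
    and conn: "connection c rE rT tens d0 nabla"
  shows "bimodule_connection c lE rE lT rT tens d0 (sigma wT F) nabla
           \<longleftrightarrow> nabla ` centre_bimod lE rE \<subseteq> centre_bimod lT rT"
proof -
  have bE: "bimodule c lE rE" and bW: "bimodule c lW rW"
    using calc unfolding diff_calc_def by auto
  have d0_mult: "\<And>a b. d0 (a * b) = rE (d0 a) b + lE a (d0 b)"
    using calc unfolding diff_calc_def by auto
  have wedge_r: "\<And>a e f. wedge e (rE f a) = rW (wedge e f) a"
    using calc unfolding diff_calc_def by auto
  have lE_add: "\<And>a. additive (lE a)" using bE unfolding bimodule_def additive_def by auto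
  have rE_assoc: "\<And>a b m. rE m (a * b) = rE (rE m a) b" using bE unfolding bimodule_def by auto
  have lE_rE: "\<And>a b m. lE a (rE m b) = rE (lE a m) b" using bE unfolding bimodule_def by auto
  have rW_add: "\<And>a. additive (\<lambda>w. rW w a)" using bW unfolding bimodule_def additive_def by auto
  have tbij: "is_tensor_product UNIV UNIV UNIV rE lE tens" using tensor unfolding tensor_square_def by auto
  have tens_add1: "\<And>f. additive (\<lambda>e. tens e f)" and tens_add2: "\<And>e. additive (tens e)"
    and tens_bal: "\<And>e f a. tens (rE e a) f = tens e (lE a f)"
    using tbij unfolding induced_map_bij_def balanced_map_def additive_def by auto
  have tspan: "\<And>t. \<exists>x. fsum_eval tens x = t"
    using tbij unfolding induced_map_bij_def by blast
  have lT_add: "\<And>a. additive (lT a)" and rT_add: "\<And>a. additive (\<lambda>t. rT t a)"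
    and lT_tens: "\<And>a e f. lT a (tens e f) = tens (lE a e) f"
    and rT_tens: "\<And>a e f. rT (tens e f) a = tens e (rE f a)"
    using tensor unfolding tensor_square_def by auto
  have nabla_add: "additive nabla"
    and nabla_r: "\<And>w a. nabla (rE w a) = rT (nabla w) a + tens w (d0 a)"
    using conn unfolding connection_def by auto
  have espan: "\<And>e. \<exists>x. Poly_Mapping.keys x \<subseteq> centre_bimod lE rE \<times> UNIV \<and> fsum_eval rE x = e"
    using cond1 unfolding induced_map_bij_def by blast
  have Z: "\<And>w a. w \<in> centre_bimod lE rE \<Longrightarrow> lE a w = rE w a"
    unfolding centre_bimod_def by auto
  have wT_r: "wT (rT t a) = rW (wT t) a" for t a
  proof -
    obtain x where x: "fsum_eval tens x = t" using tspan by blast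
    have "(\<lambda>t. wT (rT t a)) (fsum_eval tens x) = (\<lambda>t. rW (wT t) a) (fsum_eval tens x)"
      apply (rule additive_eq_span)
      using wT_add rT_add[of a] rW_add[of a]
      by (auto simp: additive_def rT_tens wT_tens wedge_r)
    then show ?thesis using x by simp
  qed
  have lT_rT: "lT a (rT t b) = rT (lT a t) b" for t a b
  proof -
    obtain x where x: "fsum_eval tens x = t" using tspan by blast
    have "(\<lambda>t. lT a (rT t b)) (fsum_eval tens x) = (\<lambda>t. rT (lT a t) b) (fsum_eval tens x)"
      apply (rule additive_eq_span)
      using lT_add[of a] rT_add[of b]
      by (auto simp: additive_def rT_tens lT_tens)
    then show ?thesis using x by simp
  qed
  have rT_assoc: "rT (rT t a) b = rT t (a * b)" for t a b
  proof -
    obtain x where x: "fsum_eval tens x = t" using tspan by blast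
    have "(\<lambda>t. rT (rT t a) b) (fsum_eval tens x) = (\<lambda>t. rT t (a * b)) (fsum_eval tens x)"
      apply (rule additive_eq_span)
      using rT_add[of a] rT_add[of b] rT_add[of "a*b"]
      by (auto simp: additive_def rT_tens rE_assoc)
    then show ?thesis using x by simp
  qed
  have F0: "0 \<in> F" and Fadd: "\<And>x y. x \<in> F \<Longrightarrow> y \<in> F \<Longrightarrow> x + y \<in> F"
    and Fneg: "\<And>x. x \<in> F \<Longrightarrow> - x \<in> F" and Fr: "\<And>x a. x \<in> F \<Longrightarrow> rT x a \<in> F"
    using F_sub unfolding right_submodule_def by auto
  have Fdiff: "\<And>x y. x \<in> F \<Longrightarrow> y \<in> F \<Longrightarrow> x - y \<in> F"
    using Fadd Fneg by (metis diff_conv_add_uminus)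
  have uniq: "k = k'" if "wT k = 0" "t - k \<in> F" "wT k' = 0" "t - k' \<in> F" for t k k'
  proof -
    have "k - k' = (t - k') - (t - k)" by simp
    then have "k - k' \<in> F" using Fdiff that by metis
    moreover have "wT (k - k') = 0" using additive_diff[OF wT_add] that by simp
    ultimately have "k - k' \<in> {k. wT k = 0} \<inter> F" by simp
    then show ?thesis using cond2_int by simp
  qed
  have Psym_eq: "Psym wT F t = k" if "wT k = 0" "t - k \<in> F" for t k
    unfolding Psym_def using that uniq by blast
  have Psym_ex: "wT (Psym wT F t) = 0 \<and> t - Psym wT F t \<in> F" for t
  proof -
    obtain k f where "wT k = 0" "f \<in> F" "t = k + f" using cond2_sum by blast
    then have "wT k = 0" "t - k \<in> F" by auto
    then show ?thesis using Psym_eq by simp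
  qed
  have Psym_add: "Psym wT F (s + t) = Psym wT F s + Psym wT F t" for s t
  proof (rule Psym_eq)
    show "wT (Psym wT F s + Psym wT F t) = 0" using Psym_ex wT_add unfolding additive_def by simp
    have "s + t - (Psym wT F s + Psym wT F t) = (s - Psym wT F s) + (t - Psym wT F t)" by simp
    then show "s + t - (Psym wT F s + Psym wT F t) \<in> F" using Psym_ex Fadd by metis
  qed
  have Psym_r: "Psym wT F (rT t a) = rT (Psym wT F t) a" for t a
  proof (rule Psym_eq)
    show "wT (rT (Psym wT F t) a) = 0" using Psym_ex wT_r additive_0[OF rW_add] by simp
    have "rT t a - rT (Psym wT F t) a = rT (t - Psym wT F t) a"
      using additive_diff[OF rT_add] by metis
    then show "rT t a - rT (Psym wT F t) a \<in> F" using Psym_ex Fr by metis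
  qed
  have sig_add: "additive (sigma wT F)"
    unfolding additive_def sigma_def using Psym_add by (simp add: algebra_simps)
  have sig_r: "sigma wT F (rT t a) = rT (sigma wT F t) a" for t a
    unfolding sigma_def Psym_r using rT_add[of a] additive_diff[OF rT_add[of a]]
    unfolding additive_def by simp
  have key: "sigma wT F (tens e w) = tens w e" if w: "w \<in> centre_bimod lE rE" for e w
  proof -
    obtain x where x: "Poly_Mapping.keys x \<subseteq> centre_bimod lE rE \<times> UNIV" "fsum_eval rE x = e"
      using espan by blast
    have "(\<lambda>e. sigma wT F (tens e w)) (fsum_eval rE x) = (\<lambda>e. tens w e) (fsum_eval rE x)"
    proof (rule additive_eq_span)
      show "additive (\<lambda>e. sigma wT F (tens e w))"
        using sig_add tens_add1[of w] unfolding additive_def by simp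
      show "additive (tens w)" by (rule tens_add2)
      fix k assume "k \<in> Poly_Mapping.keys x"
      then have k: "fst k \<in> centre_bimod lE rE" using x by auto
      have "sigma wT F (tens (rE (fst k) (snd k)) w) = sigma wT F (tens (fst k) (rE w (snd k)))"
        using tens_bal Z[OF w] by metis
      also have "\<dots> = rT (tens w (fst k)) (snd k)"
        using rT_tens sig_r cond3[OF k w] by metis
      also have "\<dots> = tens w (rE (fst k) (snd k))" by (rule rT_tens)
      finally show "sigma wT F (tens (rE (fst k) (snd k)) w) = tens w (rE (fst k) (snd k))" .
    qed
    then show ?thesis using x by simp
  qed
  show ?thesis
  proof
    assume bc: "bimodule_connection c lE rE lT rT tens d0 (sigma wT F) nabla"
    then have nabla_l: "\<And>a e. nabla (lE a e) = lT a (nabla e) + sigma wT F (tens (d0 a) e)"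
      unfolding bimodule_connection_def by auto
    show "nabla ` centre_bimod lE rE \<subseteq> centre_bimod lT rT"
    proof
      fix t assume "t \<in> nabla ` centre_bimod lE rE"
      then obtain w where w: "w \<in> centre_bimod lE rE" "t = nabla w" by blast
      have "lT a t = rT t a" for a
      proof -
        have "nabla (lE a w) = nabla (rE w a)" using Z[OF w(1)] by simp
        then have "lT a (nabla w) + tens w (d0 a) = rT (nabla w) a + tens w (d0 a)"
          using nabla_l nabla_r key[OF w(1)] by simp
        then show ?thesis using w by simp
      qed
      then show "t \<in> centre_bimod lT rT" unfolding centre_bimod_def by simp
    qed
  next
    assume cent: "nabla ` centre_bimod lE rE \<subseteq> centre_bimod lT rT"
    have "nabla (lE a e) = lT a (nabla e) + sigma wT F (tens (d0 a) e)" for a e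
    proof -
      obtain x where x: "Poly_Mapping.keys x \<subseteq> centre_bimod lE rE \<times> UNIV" "fsum_eval rE x = e"
        using espan by blast
      have "(\<lambda>e. nabla (lE a e)) (fsum_eval rE x)
          = (\<lambda>e. lT a (nabla e) + sigma wT F (tens (d0 a) e)) (fsum_eval rE x)"
      proof (rule additive_eq_span)
        show "additive (\<lambda>e. nabla (lE a e))"
          using nabla_add lE_add[of a] unfolding additive_def by simp
        show "additive (\<lambda>e. lT a (nabla e) + sigma wT F (tens (d0 a) e))"
          using nabla_add lT_add[of a] sig_add tens_add2[of "d0 a"] unfolding additive_def
          by (simp add: algebra_simps)
        fix k assume "k \<in> Poly_Mapping.keys x"
        then have k: "fst k \<in> centre_bimod lE rE" using x by auto
        define w where "w = fst k"
        define b where "b = snd k"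
        have wZ: "w \<in> centre_bimod lE rE" using k w_def by simp
        have nc: "lT a (nabla w) = rT (nabla w) a"
          using cent wZ unfolding centre_bimod_def by auto
        have "nabla (lE a (rE w b)) = nabla (rE w (a * b))"
          using lE_rE Z[OF wZ] rE_assoc by metis
        also have "\<dots> = rT (nabla w) (a * b) + tens w (rE (d0 a) b) + tens w (lE a (d0 b))"
          using nabla_r d0_mult tens_add2[of w] unfolding additive_def by (simp add: add.assoc)
        also have "\<dots> = lT a (rT (nabla w) b + tens w (d0 b)) + sigma wT F (tens (d0 a) (rE w b))"
        proof -
          have 1: "lT a (rT (nabla w) b + tens w (d0 b)) = rT (nabla w) (a * b) + tens w (lE a (d0 b))"
            using lT_add[of a] unfolding additive_def
            by (simp add: lT_rT nc rT_assoc lT_tens Z[OF wZ] tens_bal)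
          have 2: "sigma wT F (tens (d0 a) (rE w b)) = tens w (rE (d0 a) b)"
            using rT_tens sig_r key[OF wZ] by metis
          show ?thesis using 1 2 by (simp add: algebra_simps)
        qed
        also have "\<dots> = lT a (nabla (rE w b)) + sigma wT F (tens (d0 a) (rE w b))"
          using nabla_r by simp
        finally show "nabla (lE a (rE (fst k) (snd k))) =
          lT a (nabla (rE (fst k) (snd k))) + sigma wT F (tens (d0 a) (rE (fst k) (snd k)))"
          using w_def b_def by simp
      qed
      then show ?thesis using x by simp
    qed
    then show "bimodule_connection c lE rE lT rT tens d0 (sigma wT F) nabla"
      unfolding bimodule_connection_def using conn by simp
  qed
qed

end
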